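(* Let $(G,\precsim)$ be a compatible quasi-ordered abelian group and let $G^o$ be its set of o-type elements. Then $G^o$ is an initial segment of $G$ and a subgroup of $G$; in particular $(G^o,\precsim)$ is an ordered abelian group.
   Context: A compatible quasi-ordered abelian group is an abelian group $G$ with a total quasi-order $\precsim$ (reflexive, transitive, any two elements comparable) such that, writing $a\sim b$ for $a\precsim b\wedge b\precsim a$: $(Q_1)$ $x\sim0\Rightarrow x=0$; $(Q_2)$ $x\precsim y\wedge y\not\sim z\Rightarrow x+z\precsim y+z$, for all $x,y,z$. With $cl(g)$ the $\sim$-class of $g$, an element $g$ is o-type if $cl(g)=\{g\}$ and $g$ is not of order $2$. A set $S$ is an initial segment if $s\in S$, $a\precsim s$ imply $a\in S$. An ordered abelian group is a group with a total order $\le$ such that $x\le y\Rightarrow x+z\le y+z$. *)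

theory Defs
  imports Main
begin

definition qsim :: "('a \<Rightarrow> 'a \<Rightarrow> bool) \<Rightarrow> 'a \<Rightarrow> 'a \<Rightarrow> bool" where
  "qsim le a b \<longleftrightarrow> le a b \<and> le b a"

definition total_quasi_order :: "('a \<Rightarrow> 'a \<Rightarrow> bool) \<Rightarrow> bool" where
  "total_quasi_order le \<longleftrightarrow>
     (\<forall>x. le x x) \<and> (\<forall>x y z. le x y \<longrightarrow> le y z \<longrightarrow> le x z) \<and> (\<forall>x y. le x y \<or> le y x)"

definition cqo_group :: "('a::ab_group_add \<Rightarrow> 'a \<Rightarrow> bool) \<Rightarrow> bool" where
  "cqo_group le \<longleftrightarrow> total_quasi_order le
     \<and> (\<forall>x. qsim le x 0 \<longrightarrow> x = 0)
     \<and> (\<forall>x y z. le x y \<and> \<not> qsim le y z \<longrightarrow> le (x + z) (y + z))"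

definition qclass :: "('a \<Rightarrow> 'a \<Rightarrow> bool) \<Rightarrow> 'a \<Rightarrow> 'a set" where
  "qclass le g = {h. qsim le h g}"

definition order_two :: "'a::ab_group_add \<Rightarrow> bool" where
  "order_two g \<longleftrightarrow> g \<noteq> 0 \<and> g + g = 0"

definition o_type :: "('a::ab_group_add \<Rightarrow> 'a \<Rightarrow> bool) \<Rightarrow> 'a \<Rightarrow> bool" where
  "o_type le g \<longleftrightarrow> qclass le g = {g} \<and> \<not> order_two g"

definition o_type_set :: "('a::ab_group_add \<Rightarrow> 'a \<Rightarrow> bool) \<Rightarrow> 'a set" where
  "o_type_set le = {g. o_type le g}"

definition initial_segment :: "('a \<Rightarrow> 'a \<Rightarrow> bool) \<Rightarrow> 'a set \<Rightarrow> bool" where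
  "initial_segment le S \<longleftrightarrow> (\<forall>s\<in>S. \<forall>a. le a s \<longrightarrow> a \<in> S)"

definition add_subgroup :: "'a::ab_group_add set \<Rightarrow> bool" where
  "add_subgroup S \<longleftrightarrow> 0 \<in> S \<and> (\<forall>x\<in>S. \<forall>y\<in>S. x + y \<in> S) \<and> (\<forall>x\<in>S. - x \<in> S)"

definition ordered_ab_group_on :: "'a::ab_group_add set \<Rightarrow> ('a \<Rightarrow> 'a \<Rightarrow> bool) \<Rightarrow> bool" where
  "ordered_ab_group_on S le \<longleftrightarrow> add_subgroup S
     \<and> (\<forall>x\<in>S. le x x)
     \<and> (\<forall>x\<in>S. \<forall>y\<in>S. \<forall>z\<in>S. le x y \<longrightarrow> le y z \<longrightarrow> le x z)
     \<and> (\<forall>x\<in>S. \<forall>y\<in>S. le x y \<longrightarrow> le y x \<longrightarrow> x = y)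
     \<and> (\<forall>x\<in>S. \<forall>y\<in>S. le x y \<or> le y x)
     \<and> (\<forall>x\<in>S. \<forall>y\<in>S. \<forall>z\<in>S. le x y \<longrightarrow> le (x + z) (y + z))"

end

theory Submission
  imports Defs
begin

locale cqo =
  fixes le :: "'a::ab_group_add \<Rightarrow> 'a \<Rightarrow> bool"
  assumes c: "cqo_group le"
begin

abbreviation sim where "sim x y \<equiv> qsim le x y"

lemma refl: "le x x" using c unfolding cqo_group_def total_quasi_order_def by blast
lemma trans: "le x y \<Longrightarrow> le y z \<Longrightarrow> le x z" using c unfolding cqo_group_def total_quasi_order_def by blast
lemma total: "le x y \<or> le y x" using c unfolding cqo_group_def total_quasi_order_def by blast
lemma q1: "sim x 0 \<Longrightarrow> x = 0" using c unfolding cqo_group_def by blast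
lemma q2: "le x y \<Longrightarrow> \<not> sim y z \<Longrightarrow> le (x + z) (y + z)" using c unfolding cqo_group_def by blast

lemma q1': "le x 0 \<Longrightarrow> le 0 x \<Longrightarrow> x = 0" using q1 unfolding qsim_def by blast

lemma F1': assumes "le x 0" shows "le 0 (- x)"
proof (cases "x = 0")
  case True then show ?thesis using refl by simp
next
  case False
  have "\<not> sim 0 (-x)" using q1 False unfolding qsim_def by fastforce
  from q2[OF assms this] show ?thesis by simp
qed

lemma F1: assumes "le 0 x" "\<not> sim x (-x)" shows "le (-x) 0"
  using q2[OF assms] by simp

lemma sing: assumes "\<not> sim g (-g)" "sim h g" shows "h = g"
proof -
  have a: "le (h - g) 0" using q2[of h g "-g"] assms unfolding qsim_def by simp
  have "\<not> sim h (-g)" using assms trans unfolding qsim_def by blast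
  hence b: "le 0 (h - g)" using q2[of g h "-g"] assms unfolding qsim_def by simp
  from q1'[OF a b] show ?thesis by simp
qed

lemma otype_iff: "o_type le g \<longleftrightarrow> g = 0 \<or> \<not> sim g (-g)"
proof
  assume o: "o_type le g"
  show "g = 0 \<or> \<not> sim g (-g)"
  proof (rule ccontr)
    assume "\<not> ?thesis"
    hence n: "g \<noteq> 0" "sim g (-g)" by auto
    hence "-g \<in> qclass le g" unfolding qclass_def qsim_def by auto
    hence "-g = g" using o unfolding o_type_def by auto
    hence "order_two g" using n unfolding order_two_def by (metis add_eq_0_iff)
    thus False using o unfolding o_type_def by auto
  qed
next
  assume h: "g = 0 \<or> \<not> sim g (-g)"
  have cl: "qclass le g = {g}"
  proof -
    have "h = g" if "sim h g" for h
      using h that q1 sing by blast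
    moreover have "sim g g" using refl unfolding qsim_def by auto
    ultimately show ?thesis unfolding qclass_def by auto
  qed
  have "\<not> order_two g"
  proof
    assume "order_two g"
    hence "g \<noteq> 0" "-g = g" unfolding order_two_def by (auto simp: add_eq_0_iff)
    thus False using h refl unfolding qsim_def by auto
  qed
  thus "o_type le g" using cl unfolding o_type_def by auto
qed

lemma neg_o: "o_type le g \<Longrightarrow> o_type le (-g)"
  unfolding otype_iff qsim_def by auto

lemma init: assumes s: "o_type le s" and as: "le a s" shows "o_type le a"
proof (rule ccontr)
  assume na: "\<not> o_type le a"
  hence a0: "a \<noteq> 0" and aa: "sim a (-a)" unfolding otype_iff by auto
  have pa: "\<not> le a 0"
  proof
    assume "le a 0"
    hence "le 0 (-a)" by (rule F1')
    hence "le 0 a" using aa trans unfolding qsim_def by blast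
    thus False using q1' \<open>le a 0\<close> a0 by blast
  qed
  have s0: "s \<noteq> 0" using pa as by auto
  hence ss: "\<not> sim s (-s)" using s unfolding otype_iff by auto
  have ps: "\<not> le s 0" using pa as trans by blast
  hence ms: "le (-s) 0" using F1 ss total by blast
  have "\<not> sim a s"
  proof
    assume "sim a s"
    hence "a = s" using sing ss by blast
    thus False using aa ss by simp
  qed
  have mas: "le (-a) s" using aa as trans unfolding qsim_def by blast
  have "\<not> sim s a" using \<open>\<not> sim a s\<close> unfolding qsim_def by auto
  have "\<not> sim s (-a)" using \<open>\<not> sim s a\<close> aa trans unfolding qsim_def by blast
  have k1: "le (-a - s) 0" using q2[OF mas ss] by simp
  have z1: "le 0 a" using pa total by blast
  have st: "le s (s + a)" using q2[OF z1, of s] \<open>\<not> sim a s\<close> unfolding qsim_def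
    by (simp add: add.commute)
  show False
  proof (cases "a + a = 0")
    case False
    have "le (s - a) (s + a)" using q2[of "-a" a s] aa \<open>\<not> sim a s\<close> unfolding qsim_def
      by (simp add: algebra_simps)
    moreover have "\<not> sim (-a) s" using \<open>\<not> sim s (-a)\<close> unfolding qsim_def by auto
    moreover have "le (s + a) (s - a)" using q2[of a "-a" s] aa \<open>\<not> sim (-a) s\<close> unfolding qsim_def
      by (simp add: algebra_simps)
    ultimately have "sim (s - a) (s + a)" unfolding qsim_def by auto
    moreover have "s - a \<noteq> s + a" using False
      by (metis add_left_cancel diff_conv_add_uminus add_eq_0_iff)
    ultimately have "sim (s + a) (- (s + a))" using sing by blast
    hence "le (s + a) 0" using k1 trans unfolding qsim_def by (auto simp: algebra_simps)
    thus False using st ps trans by blast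
  next
    case True
    hence ma: "-a = a" by (simp add: add_eq_0_iff)
    define t where "t = s + a"
    have "\<not> le t 0" using st ps trans t_def by blast
    have "le (-t) 0" using k1 ma t_def by (simp add: algebra_simps)
    have tt: "\<not> sim t (-t)"
    proof
      assume "sim t (-t)"
      thus False using \<open>le (-t) 0\<close> \<open>\<not> le t 0\<close> trans unfolding qsim_def by blast
    qed
    have "\<not> sim a t"
    proof
      assume "sim a t" hence "a = t" using sing tt by blast
      thus False using aa tt by simp
    qed
    have "le t (t + a)" using q2[OF z1, of t] \<open>\<not> sim a t\<close> unfolding qsim_def
      by (simp add: add.commute)
    moreover have "t + a = s" using True t_def by (simp add: add.assoc)
    ultimately have "sim s t" using st t_def unfolding qsim_def by metis
    hence "sim t s" unfolding qsim_def by auto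
    hence "t = s" using sing[OF ss] by blast
    thus False using a0 t_def by simp
  qed
qed

lemma sum_o: assumes x: "o_type le x" and y: "o_type le y" and xy: "le x y" shows "o_type le (x + y)"
proof (cases "le y 0")
  case True
  hence x0: "le x 0" using xy trans by blast
  show ?thesis
  proof (cases "y = 0")
    case True then show ?thesis using x by simp
  next
    case False
    hence "\<not> sim 0 y" using q1 unfolding qsim_def by blast
    hence "le (x + y) y" using q2[OF x0] by simp
    hence "le (x + y) 0" using True trans by blast
    moreover have "o_type le 0" using otype_iff by auto
    ultimately show ?thesis using init by blast
  qed
next
  case False
  hence y0: "y \<noteq> 0" by (auto simp: refl)
  show ?thesis
  proof (cases "le x 0")
    case True
    have "\<not> sim 0 y" using q1 y0 unfolding qsim_def by blast
    hence "le (x + y) y" using q2[OF True] by simp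
    thus ?thesis using init y by blast
  next
    case nx: False
    have yy: "\<not> sim y (-y)" using y y0 otype_iff by auto
    have "le 0 y" using False total by blast
    hence my: "le (-y) 0" using F1 yy by blast
    have x0: "x \<noteq> 0" using nx refl by auto
    have xx: "\<not> sim x (-x)" using x x0 otype_iff by auto
    have mx: "le (-x) 0" using F1 xx nx total by blast
    have "\<not> sim 0 (-y)" using q1 y0 unfolding qsim_def by fastforce
    hence "le (-x + -y) (0 + -y)" using q2[OF mx] by blast
    hence "le (-x + -y) (-y)" by simp
    hence "le (-x + -y) 0" using my trans by blast
    moreover have "o_type le 0" using otype_iff by auto
    ultimately have "o_type le (-x + -y)" using init by blast
    from neg_o[OF this] show ?thesis by (simp add: algebra_simps)
  qed
qed

lemma sub: "add_subgroup (o_type_set le)"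
  unfolding add_subgroup_def o_type_set_def
proof (intro conjI ballI)
  show "0 \<in> {g. o_type le g}" using otype_iff by auto
next
  fix x y assume "x \<in> {g. o_type le g}" "y \<in> {g. o_type le g}"
  thus "x + y \<in> {g. o_type le g}" using sum_o total by (metis add.commute mem_Collect_eq)
next
  fix x assume "x \<in> {g. o_type le g}" thus "- x \<in> {g. o_type le g}" using neg_o by auto
qed

lemma compat: assumes x: "o_type le x" and y: "o_type le y" and xy: "le x y"
  shows "le (x + z) (y + z)"
proof (cases "sim y z")
  case False then show ?thesis using q2 xy by blast
next
  case True
  hence "z = y" using y sing q1 otype_iff unfolding qsim_def by metis
  show ?thesis
  proof (cases "y = 0")
    case True then show ?thesis using xy \<open>z = y\<close> by simp
  next
    case False
    have yy: "\<not> sim y (-y)" using y False otype_iff by auto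
    have a: "le (x - y) 0" using q2[OF xy yy] by simp
    have "y + y \<noteq> 0" using y False unfolding o_type_def order_two_def by auto
    hence "\<not> sim 0 (y + y)" using q1 unfolding qsim_def by fastforce
    from q2[OF a this] show ?thesis using \<open>z = y\<close> by (simp add: algebra_simps)
  qed
qed

end

theorem mainTheorem6:
  fixes le :: "'a::ab_group_add \<Rightarrow> 'a \<Rightarrow> bool"
  assumes "cqo_group le"
  shows "initial_segment le (o_type_set le) \<and> add_subgroup (o_type_set le)
         \<and> ordered_ab_group_on (o_type_set le) le"
proof -
  interpret cqo le using assms by unfold_locales
  have i: "initial_segment le (o_type_set le)"
    unfolding initial_segment_def o_type_set_def using init by blast
  have o: "ordered_ab_group_on (o_type_set le) le"
    unfolding ordered_ab_group_on_def
  proof (intro conjI sub ballI impI)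
    fix x assume "x \<in> o_type_set le" show "le x x" by (rule refl)
  next
    fix x y z assume "le x y" "le y z" thus "le x z" by (rule trans)
  next
    fix x y assume "x \<in> o_type_set le" "le x y" "le y x"
    thus "x = y" using sing q1 otype_iff unfolding o_type_set_def qsim_def by (metis mem_Collect_eq)
  next
    fix x y show "le x y \<or> le y x" by (rule total)
  next
    fix x y z assume "x \<in> o_type_set le" "y \<in> o_type_set le" "z \<in> o_type_set le" "le x y"
    thus "le (x + z) (y + z)" using compat unfolding o_type_set_def by blast
  qed
  show ?thesis using i sub o by blast
qed

end
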